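(* Let $a>0$, $b>0$, $g>0$, $m>0$, $n>0$ and $0<e<1$, and consider the quadratic equation in $y$ $$a_1y^2+a_2y+a_3=0,$$ where $a_1=(eg+1)n$, $a_2=(b+m)(eg+1)+n(e-a)$, $a_3=e(b+m)-ab$, and let $\Delta=a_2^2-4a_1a_3$. Then: (1) if $a>\frac{e(m+b)}{b}$, the equation has a positive root $y_1=\frac{-a_2+\sqrt{\Delta}}{2a_1}$; (2) if $n>\frac{(eg+1)b^2+m(eg+1)b}{me}$ and $a=\frac{e(m+b)}{b}$, the equation has a positive root $y_1=\frac{-a_2+\sqrt{\Delta}}{2a_1}$.
   Context: This quadratic is the equation satisfied by the $y$-coordinate of a positive (endemic) equilibrium of the planar system $\dot x=a-ex-\frac{xy}{1+gy}$, $\dot y=\frac{xy}{1+gy}-y-\frac{my}{b+ny}$ (a rescaled SIR epidemic model with saturated incidence and saturated treatment), after substituting $x=\frac{a(1+gy)}{e+(eg+1)y}$. *)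

theory Defs
  imports Complex_Main
begin

end

theory Submission
  imports Defs
begin

lemma quad_root:
  fixes A B C :: real
  assumes "A > 0" "B^2 - 4*A*C \<ge> 0"
  shows "A * ((- B + sqrt (B^2 - 4*A*C)) / (2*A))^2 + B * ((- B + sqrt (B^2 - 4*A*C)) / (2*A)) + C = 0"
proof -
  define s where "s = sqrt (B^2 - 4*A*C)"
  have s2: "s^2 = B^2 - 4*A*C" using assms(2) s_def by simp
  have "A * ((- B + s) / (2*A))^2 + B * ((- B + s) / (2*A)) + C
        = (s^2 - (B^2 - 4*A*C)) / (4*A)"
    using assms(1) by (simp add: field_simps power2_eq_square)
  also have "\<dots> = 0" using s2 by simp
  finally show ?thesis unfolding s_def .
qed

theorem lemma1p1:
  fixes a b g m n e :: real
  assumes "a > 0" "b > 0" "g > 0" "m > 0" "n > 0" "0 < e" "e < 1"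
  defines "a1 \<equiv> (e*g + 1) * n"
      and "a2 \<equiv> (b + m) * (e*g + 1) + n * (e - a)"
      and "a3 \<equiv> e * (b + m) - a * b"
  defines "\<Delta> \<equiv> a2^2 - 4 * a1 * a3"
  defines "y1 \<equiv> (- a2 + sqrt \<Delta>) / (2 * a1)"
  shows "(a > e * (m + b) / b \<longrightarrow>
            \<Delta> \<ge> 0 \<and> y1 > 0 \<and> a1 * y1^2 + a2 * y1 + a3 = 0)
       \<and> (n > ((e*g + 1) * b^2 + m * (e*g + 1) * b) / (m * e) \<and> a = e * (m + b) / b \<longrightarrow>
            \<Delta> \<ge> 0 \<and> y1 > 0 \<and> a1 * y1^2 + a2 * y1 + a3 = 0)"
proof -
  have a1p: "a1 > 0" unfolding a1_def using assms by (simp add: mult_pos_pos add_pos_pos)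
  have root: "\<Delta> \<ge> 0 \<Longrightarrow> a1 * y1^2 + a2 * y1 + a3 = 0"
    unfolding y1_def \<Delta>_def using quad_root[OF a1p] by simp
  show ?thesis
  proof (rule conjI; rule impI)
    assume h: "a > e * (m + b) / b"
    have "a3 < 0" using h assms(2) unfolding a3_def by (simp add: field_simps)
    hence "4*a1*a3 < 0" using a1p by (simp add: mult_pos_neg)
    hence D: "\<Delta> > a2^2" unfolding \<Delta>_def by simp
    hence "sqrt \<Delta> > sqrt (a2^2)" using real_sqrt_less_iff by blast
    hence "sqrt \<Delta> > a2" using real_sqrt_abs[of a2] by linarith
    hence "y1 > 0" unfolding y1_def using a1p by simp
    moreover have "\<Delta> \<ge> 0" using D by (smt (verit) zero_le_power2)
    ultimately show "\<Delta> \<ge> 0 \<and> y1 > 0 \<and> a1 * y1^2 + a2 * y1 + a3 = 0" using root by simp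
  next
    assume h: "n > ((e*g + 1) * b^2 + m * (e*g + 1) * b) / (m * e) \<and> a = e * (m + b) / b"
    have a3z: "a3 = 0" using h assms(2) unfolding a3_def by (simp add: field_simps)
    have "n * (m*e) > (e*g + 1) * b^2 + m * (e*g + 1) * b"
      using h assms by (simp add: pos_divide_less_eq)
    moreover have "a * b = e * (m + b)" using h assms(2) by simp
    moreover have "a2 * b = (b+m)*(e*g+1)*b + n*e*b - n*(a*b)" unfolding a2_def by (simp add: algebra_simps)
    ultimately have "a2 * b < 0" by (simp add: algebra_simps power2_eq_square)
    hence a2n: "a2 < 0" using assms(2) by (simp add: mult_less_0_iff)
    have D: "\<Delta> = a2^2" unfolding \<Delta>_def a3z by simp
    hence "sqrt \<Delta> = - a2" using a2n by simp
    hence "y1 > 0" unfolding y1_def using a1p a2n by (simp add: divide_neg_pos)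
    thus "\<Delta> \<ge> 0 \<and> y1 > 0 \<and> a1 * y1^2 + a2 * y1 + a3 = 0" using root D by simp
  qed
qed

end
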